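(* For every prime power $q\ge 5$, $\chi_D(LG_q)=3$.
   Context: Let $\mathbb{F}_q$ be the field with $q$ elements and $V=\mathbb{F}_q^3$. Let $\mathcal{P}$ be the set of $1$-dimensional subspaces ("points") and $\mathcal{L}$ the set of $2$-dimensional subspaces ("lines") of $V$. The Levi graph $LG_q$ is the bipartite graph with vertex set $\mathcal{P}\sqcup\mathcal{L}$ in which a point $p$ is adjacent to a line $l$ iff $p\subset l$. A coloring is distinguishing if the only graph automorphism mapping every color class onto itself is the identity; $\chi_D(G)$ is the minimum number of colors of a proper distinguishing coloring of $G$. *)

theory Defs
  imports "HOL-Analysis.Analysis"
begin

definition graph_aut :: "'v set \<Rightarrow> ('v \<Rightarrow> 'v \<Rightarrow> bool) \<Rightarrow> ('v \<Rightarrow> 'v) \<Rightarrow> bool" where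
  "graph_aut V E \<sigma> \<longleftrightarrow> bij_betw \<sigma> V V \<and> (\<forall>u\<in>V. \<forall>v\<in>V. E u v \<longleftrightarrow> E (\<sigma> u) (\<sigma> v))"

definition proper_coloring :: "'v set \<Rightarrow> ('v \<Rightarrow> 'v \<Rightarrow> bool) \<Rightarrow> ('v \<Rightarrow> nat) \<Rightarrow> bool" where
  "proper_coloring V E c \<longleftrightarrow> (\<forall>u\<in>V. \<forall>v\<in>V. E u v \<longrightarrow> c u \<noteq> c v)"

definition distinguishing :: "'v set \<Rightarrow> ('v \<Rightarrow> 'v \<Rightarrow> bool) \<Rightarrow> ('v \<Rightarrow> nat) \<Rightarrow> bool" where
  "distinguishing V E c \<longleftrightarrow>
     (\<forall>\<sigma>. graph_aut V E \<sigma> \<and> (\<forall>i. \<sigma> ` {v\<in>V. c v = i} = {v\<in>V. c v = i})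
          \<longrightarrow> (\<forall>v\<in>V. \<sigma> v = v))"

definition dist_chromatic_number :: "'v set \<Rightarrow> ('v \<Rightarrow> 'v \<Rightarrow> bool) \<Rightarrow> nat" where
  "dist_chromatic_number V E =
     (LEAST k. \<exists>c. c ` V \<subseteq> {..<k} \<and> proper_coloring V E c \<and> distinguishing V E c)"

definition pg_points :: "('a::field ^ 3) set set" where
  "pg_points = {S. vec.subspace S \<and> vec.dim S = 1}"

definition pg_lines :: "('a::field ^ 3) set set" where
  "pg_lines = {S. vec.subspace S \<and> vec.dim S = 2}"

text \<open>Vertices are the subspaces themselves; points and lines are disjoint since their
  dimensions differ.\<close>
definition levi_vertices :: "('a::field ^ 3) set set" where
  "levi_vertices = pg_points \<union> pg_lines"

definition levi_adj :: "('a::field ^ 3) set \<Rightarrow> ('a ^ 3) set \<Rightarrow> bool" where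
  "levi_adj S T \<longleftrightarrow> (S \<in> pg_points \<and> T \<in> pg_lines \<and> S \<subseteq> T)
                   \<or> (T \<in> pg_points \<and> S \<in> pg_lines \<and> T \<subseteq> S)"

end

theory Submission
  imports Defs
begin


lemma span2_mem:
  fixes u w x :: "'a::field ^ 3"
  shows "x \<in> vec.span {u, w} \<longleftrightarrow> (\<exists>s t. x = s *s u + t *s w)"
proof -
  have "x \<in> vec.span {u, w} \<longleftrightarrow> (\<exists>k. x - k *s u \<in> vec.span {w})"
    using vec.span_breakdown_eq by blast
  also have "\<dots> \<longleftrightarrow> (\<exists>s t. x = s *s u + t *s w)"
    unfolding vec.span_singleton
  proof (rule iffI)
    assume "\<exists>k. x - k *s u \<in> range (\<lambda>k. k *s w)"
    then obtain k t where "x - k *s u = t *s w" by blast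
    then have "x = k *s u + t *s w" by (metis add_diff_cancel_left' add_diff_eq diff_add_cancel)
    then show "\<exists>s t. x = s *s u + t *s w" by blast
  next
    assume "\<exists>s t. x = s *s u + t *s w"
    then obtain s t where "x = s *s u + t *s w" by blast
    then have "x - s *s u = t *s w" by simp
    then show "\<exists>k. x - k *s u \<in> range (\<lambda>k. k *s w)" by blast
  qed
  finally show ?thesis .
qed

lemma pt_sub:
  fixes L :: "('a::field ^ 3) set"
  assumes "vec.subspace L"
  shows "vec.span {v} \<subseteq> L \<longleftrightarrow> v \<in> L"
  using assms vec.span_minimal vec.span_base by blast

lemma pt_in:
  fixes v :: "'a::field ^ 3"
  assumes "v \<noteq> 0" shows "vec.span {v} \<in> pg_points"
  using assms unfolding pg_points_def by simp

lemma line_in: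
  fixes u w :: "'a::field ^ 3"
  assumes "vec.independent {u, w}" "u \<noteq> w"
  shows "vec.span {u, w} \<in> pg_lines"
  using assms unfolding pg_lines_def by (simp add: vec.dim_eq_card_independent)

lemma point_repr:
  fixes p :: "('a::field ^ 3) set"
  assumes "p \<in> pg_points"
  obtains v where "v \<noteq> 0" "p = vec.span {v}"
proof -
  have sp: "vec.subspace p" "vec.dim p = 1" using assms by (auto simp: pg_points_def)
  obtain B where B: "B \<subseteq> p" "vec.independent B" "p \<subseteq> vec.span B" "card B = vec.dim p"
    using vec.basis_exists by blast
  then obtain v where v: "B = {v}" using sp card_1_singletonE by metis
  have "v \<noteq> 0" using B(2) v vec.dependent_zero by blast
  moreover have "p = vec.span {v}" using B v sp vec.span_minimal by blast
  ultimately show ?thesis using that by blast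
qed

lemma line_two_points:
  fixes l :: "('a::field ^ 3) set"
  assumes "l \<in> pg_lines"
  obtains p p' where "p \<in> pg_points" "p' \<in> pg_points" "p \<noteq> p'" "p \<subseteq> l" "p' \<subseteq> l"
proof -
  have sp: "vec.subspace l" "vec.dim l = 2" using assms by (auto simp: pg_lines_def)
  obtain B where B: "B \<subseteq> l" "vec.independent B" "l \<subseteq> vec.span B" "card B = vec.dim l"
    using vec.basis_exists by blast
  then obtain u w where uw: "B = {u, w}" "u \<noteq> w" using sp card_2_iff by metis
  have nz: "u \<noteq> 0" "w \<noteq> 0" using B(2) uw vec.dependent_zero by blast+
  have "vec.span {u} \<noteq> vec.span {w}"
  proof
    assume eq: "vec.span {u} = vec.span {w}"
    have "B \<subseteq> vec.span {u}" using uw eq vec.span_base by blast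
    then have "vec.dim B \<le> vec.dim {u}" by (rule vec.dim_mono)
    moreover have "vec.dim B = 2" using vec.dim_eq_card_independent[OF B(2)] B(4) sp by simp
    ultimately show False using nz by simp
  qed
  moreover have "vec.span {u} \<subseteq> l" "vec.span {w} \<subseteq> l"
    using B uw sp pt_sub by auto
  ultimately show ?thesis using that pt_in nz by blast
qed

lemma join_exists:
  fixes p p' :: "('a::field ^ 3) set"
  assumes "p \<in> pg_points" "p' \<in> pg_points" "p \<noteq> p'"
  shows "\<exists>l\<in>pg_lines. p \<subseteq> l \<and> p' \<subseteq> l"
proof -
  let ?S = "{x + y |x y. x \<in> p \<and> y \<in> p'}"
  have sp: "vec.subspace p" "vec.dim p = 1" "vec.subspace p'" "vec.dim p' = 1"
    using assms by (auto simp: pg_points_def)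
  have ds: "vec.dim ?S + vec.dim (p \<inter> p') = 2"
    using vec.dim_sums_Int[OF sp(1) sp(3)] sp by simp
  have "vec.dim (p \<inter> p') \<noteq> 1"
  proof
    assume h: "vec.dim (p \<inter> p') = 1"
    have "p \<inter> p' = p" using vec.subspace_dim_equal[of "p \<inter> p'" p] sp h vec.subspace_inter by auto
    moreover have "p \<inter> p' = p'" using vec.subspace_dim_equal[of "p \<inter> p'" p'] sp h vec.subspace_inter by auto
    ultimately show False using assms by simp
  qed
  moreover have "vec.dim (p \<inter> p') \<le> 1" using vec.dim_subset[of "p \<inter> p'" p] sp by simp
  ultimately have "vec.dim ?S = 2" using ds by linarith
  moreover have "vec.subspace ?S" using vec.subspace_sums sp by blast
  moreover have "p \<subseteq> ?S"
  proof
    fix x assume "x \<in> p" then show "x \<in> ?S" using vec.subspace_0[OF sp(3)] by force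
  qed
  moreover have "p' \<subseteq> ?S"
  proof
    fix x assume "x \<in> p'" then show "x \<in> ?S" using vec.subspace_0[OF sp(1)] by force
  qed
  ultimately show ?thesis unfolding pg_lines_def by blast
qed

lemma join_unique:
  fixes p p' l l' :: "('a::field ^ 3) set"
  assumes "p \<in> pg_points" "p' \<in> pg_points" "p \<noteq> p'"
    and "l \<in> pg_lines" "l' \<in> pg_lines" "p \<subseteq> l" "p' \<subseteq> l" "p \<subseteq> l'" "p' \<subseteq> l'"
  shows "l = l'"
proof -
  let ?S = "{x + y |x y. x \<in> p \<and> y \<in> p'}"
  have sp: "vec.subspace p" "vec.dim p = 1" "vec.subspace p'" "vec.dim p' = 1"
    using assms by (auto simp: pg_points_def)
  have sl: "vec.subspace l" "vec.dim l = 2" "vec.subspace l'" "vec.dim l' = 2"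
    using assms by (auto simp: pg_lines_def)
  have ds: "vec.dim ?S + vec.dim (p \<inter> p') = 2"
    using vec.dim_sums_Int[OF sp(1) sp(3)] sp by simp
  have "vec.dim (p \<inter> p') \<noteq> 1"
  proof
    assume h: "vec.dim (p \<inter> p') = 1"
    have "p \<inter> p' = p" using vec.subspace_dim_equal[of "p \<inter> p'" p] sp h vec.subspace_inter by auto
    moreover have "p \<inter> p' = p'" using vec.subspace_dim_equal[of "p \<inter> p'" p'] sp h vec.subspace_inter by auto
    ultimately show False using assms by simp
  qed
  moreover have "vec.dim (p \<inter> p') \<le> 1" using vec.dim_subset[of "p \<inter> p'" p] sp by simp
  ultimately have d2: "vec.dim ?S = 2" using ds by linarith
  have ss: "vec.subspace ?S" using vec.subspace_sums sp by blast
  have "?S \<subseteq> l" using assms sl(1) vec.subspace_add by blast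
  then have "?S = l" using vec.subspace_dim_equal[OF ss sl(1)] d2 sl by simp
  moreover have "?S \<subseteq> l'" using assms sl(3) vec.subspace_add by blast
  then have "?S = l'" using vec.subspace_dim_equal[OF ss sl(3)] d2 sl by simp
  ultimately show ?thesis by simp
qed

lemma meet_point:
  fixes l l' :: "('a::field ^ 3) set"
  assumes "l \<in> pg_lines" "l' \<in> pg_lines" "l \<noteq> l'"
  shows "l \<inter> l' \<in> pg_points"
proof -
  let ?S = "{x + y |x y. x \<in> l \<and> y \<in> l'}"
  have sl: "vec.subspace l" "vec.dim l = 2" "vec.subspace l'" "vec.dim l' = 2"
    using assms by (auto simp: pg_lines_def)
  have ds: "vec.dim ?S + vec.dim (l \<inter> l') = 4"
    using vec.dim_sums_Int[OF sl(1) sl(3)] sl by simp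
  have ss: "vec.subspace ?S" using vec.subspace_sums sl by blast
  have le3: "vec.dim ?S \<le> 3"
    using vec.dim_subset_UNIV[of ?S] by (simp add: vec.dimension_def card_cart_basis)
  have lS: "l \<subseteq> ?S"
  proof
    fix x assume "x \<in> l" then show "x \<in> ?S" using vec.subspace_0[OF sl(3)] by force
  qed
  have lS': "l' \<subseteq> ?S"
  proof
    fix x assume "x \<in> l'" then show "x \<in> ?S" using vec.subspace_0[OF sl(1)] by force
  qed
  have "vec.dim ?S \<ge> 2" using vec.dim_subset[OF lS] sl by simp
  moreover have "vec.dim ?S \<noteq> 2"
  proof
    assume h: "vec.dim ?S = 2"
    have "l = ?S" using vec.subspace_dim_equal[OF sl(1) ss lS] h sl by simp
    moreover have "l' = ?S" using vec.subspace_dim_equal[OF sl(3) ss lS'] h sl by simp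
    ultimately show False using assms by simp
  qed
  ultimately have "vec.dim ?S = 3" using le3 by linarith
  then have "vec.dim (l \<inter> l') = 1" using ds by simp
  then show ?thesis unfolding pg_points_def using vec.subspace_inter sl by blast
qed

lemma meet_unique:
  fixes l l' p :: "('a::field ^ 3) set"
  assumes "l \<in> pg_lines" "l' \<in> pg_lines" "l \<noteq> l'" "p \<in> pg_points" "p \<subseteq> l" "p \<subseteq> l'"
  shows "p = l \<inter> l'"
proof -
  have m: "l \<inter> l' \<in> pg_points" using meet_point assms by blast
  have "vec.subspace p" "vec.dim p = 1" using assms by (auto simp: pg_points_def)
  moreover have "vec.subspace (l \<inter> l')" "vec.dim (l \<inter> l') = 1" using m by (auto simp: pg_points_def)
  ultimately show ?thesis using vec.subspace_dim_equal[of p "l \<inter> l'"] assms by simp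
qed



definition pO :: "('a::field ^ 3) set" where "pO = vec.span {vector [1,0,0]}"
definition pO' :: "('a::field ^ 3) set" where "pO' = vec.span {vector [0,1,0]}"
definition lm :: "('a::field ^ 3) set" where "lm = vec.span {vector [1,0,0], vector [0,1,0]}"
definition prow :: "'a::field \<Rightarrow> ('a ^ 3) set" where "prow a = vec.span {vector [1,0,0], vector [0,a,1]}"
definition pcol :: "'a::field \<Rightarrow> ('a ^ 3) set" where "pcol b = vec.span {vector [0,1,0], vector [b,0,1]}"
definition gp :: "'a::field \<Rightarrow> 'a \<Rightarrow> ('a ^ 3) set" where "gp a b = vec.span {vector [b,a,1]}"

lemma vec3_eq: "(x :: 'a::field ^ 3) = y \<longleftrightarrow> x$1 = y$1 \<and> x$2 = y$2 \<and> x$3 = y$3"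
  by (simp add: vec_eq_iff forall_3)

lemma indep2:
  fixes u w :: "'a::field ^ 3"
  assumes "w \<noteq> 0" "\<And>k. u \<noteq> k *s w"
  shows "vec.independent {u, w}" "u \<noteq> w"
proof -
  have "vec.independent {w}" using assms(1) by (simp add: vec.independent_insert)
  moreover have "u \<notin> vec.span {w}" using assms(2) unfolding vec.span_singleton by auto
  moreover have "u \<noteq> w" using assms(2)[of 1] by simp
  ultimately show "vec.independent {u, w}" "u \<noteq> w" by (auto simp: vec.independent_insert)
qed

lemma mem_row: "(x :: 'a::field ^ 3) \<in> prow a \<longleftrightarrow> x$2 = a * x$3"
  unfolding prow_def span2_mem
proof
  assume "\<exists>s t. x = s *s vector [1, 0, 0] + t *s vector [0, a, 1]"
  then show "x$2 = a * x$3" by (auto simp: mult.commute)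
next
  assume h: "x$2 = a * x$3"
  have "x = (x$1) *s vector [1, 0, 0] + (x$3) *s vector [0, a, 1]"
    using h by (simp add: vec3_eq mult.commute)
  then show "\<exists>s t. x = s *s vector [1, 0, 0] + t *s vector [0, a, 1]" by blast
qed

lemma mem_col: "(x :: 'a::field ^ 3) \<in> pcol b \<longleftrightarrow> x$1 = b * x$3"
  unfolding pcol_def span2_mem
proof
  assume "\<exists>s t. x = s *s vector [0, 1, 0] + t *s vector [b, 0, 1]"
  then show "x$1 = b * x$3" by (auto simp: mult.commute)
next
  assume h: "x$1 = b * x$3"
  have "x = (x$2) *s vector [0, 1, 0] + (x$3) *s vector [b, 0, 1]"
    using h by (simp add: vec3_eq mult.commute)
  then show "\<exists>s t. x = s *s vector [0, 1, 0] + t *s vector [b, 0, 1]" by blast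
qed

lemma mem_lm: "(x :: 'a::field ^ 3) \<in> lm \<longleftrightarrow> x$3 = 0"
  unfolding lm_def span2_mem
proof
  assume "\<exists>s t. x = s *s vector [1, 0, 0] + t *s vector [0, 1, 0]"
  then show "x$3 = 0" by auto
next
  assume h: "x$3 = 0"
  have "x = (x$1) *s vector [1, 0, 0] + (x$2) *s vector [0, 1, 0]"
    using h by (simp add: vec3_eq)
  then show "\<exists>s t. x = s *s vector [1, 0, 0] + t *s vector [0, 1, 0]" by blast
qed

lemma lines_in:
  "(lm :: ('a::field ^ 3) set) \<in> pg_lines" "(prow a :: ('a::field ^ 3) set) \<in> pg_lines"
  "(pcol b :: ('a::field ^ 3) set) \<in> pg_lines"
proof -
  show "(lm :: ('a::field ^ 3) set) \<in> pg_lines" unfolding lm_def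
    by (rule line_in; rule indep2) (auto simp: vec3_eq)
  show "(prow a :: ('a::field ^ 3) set) \<in> pg_lines" unfolding prow_def
    by (rule line_in; rule indep2) (auto simp: vec3_eq)
  show "(pcol b :: ('a::field ^ 3) set) \<in> pg_lines" unfolding pcol_def
    by (rule line_in; rule indep2) (auto simp: vec3_eq)
qed

lemma pts_in:
  "(pO :: ('a::field ^ 3) set) \<in> pg_points" "(pO' :: ('a::field ^ 3) set) \<in> pg_points"
  "(gp a b :: ('a::field ^ 3) set) \<in> pg_points"
  unfolding pO_def pO'_def gp_def by (rule pt_in; simp add: vec3_eq)+

lemma sub_lines:
  "vec.subspace (lm :: ('a::field ^ 3) set)" "vec.subspace (prow a :: ('a::field ^ 3) set)"
  "vec.subspace (pcol b :: ('a::field ^ 3) set)"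
  using lines_in by (auto simp: pg_lines_def)

lemma inc_facts:
  "(pO :: ('a::field ^ 3) set) \<subseteq> lm" "(pO :: ('a::field ^ 3) set) \<subseteq> prow a"
  "\<not> (pO :: ('a::field ^ 3) set) \<subseteq> pcol b"
  "(pO' :: ('a::field ^ 3) set) \<subseteq> lm" "\<not> (pO' :: ('a::field ^ 3) set) \<subseteq> prow a"
  "(pO' :: ('a::field ^ 3) set) \<subseteq> pcol b"
  "(gp a b :: ('a::field ^ 3) set) \<subseteq> prow a' \<longleftrightarrow> a = a'"
  "(gp a b :: ('a::field ^ 3) set) \<subseteq> pcol b' \<longleftrightarrow> b = b'"
  "\<not> (gp a b :: ('a::field ^ 3) set) \<subseteq> lm"
  unfolding pO_def pO'_def gp_def
  by (simp_all add: pt_sub sub_lines mem_row mem_col mem_lm)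

lemma gp_inj: "(gp a b :: ('a::field ^ 3) set) = gp a' b' \<longleftrightarrow> a = a' \<and> b = b'"
proof
  assume eq: "(gp a b :: ('a::field ^ 3) set) = gp a' b'"
  have "(gp a b :: ('a::field ^ 3) set) \<subseteq> prow a'" using eq inc_facts(7)[of a' b' a'] by simp
  moreover have "(gp a b :: ('a::field ^ 3) set) \<subseteq> pcol b'" using eq inc_facts(8)[of a' b' b'] by simp
  ultimately show "a = a' \<and> b = b'" by (simp add: inc_facts(7,8))
qed simp

lemma prow_inj: "(prow a :: ('a::field ^ 3) set) = prow a' \<longleftrightarrow> a = a'"
proof
  assume eq: "(prow a :: ('a::field ^ 3) set) = prow a'"
  have "(gp a 0 :: ('a::field ^ 3) set) \<subseteq> prow a'" using eq inc_facts(7)[of a 0 a] by simp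
  then show "a = a'" by (simp add: inc_facts(7))
qed simp

lemma pcol_inj: "(pcol b :: ('a::field ^ 3) set) = pcol b' \<longleftrightarrow> b = b'"
proof
  assume eq: "(pcol b :: ('a::field ^ 3) set) = pcol b'"
  have "(gp 0 b :: ('a::field ^ 3) set) \<subseteq> pcol b'" using eq inc_facts(8)[of 0 b b] by simp
  then show "b = b'" by (simp add: inc_facts(8))
qed simp

lemma distinct_facts:
  "(pO :: ('a::field ^ 3) set) \<noteq> pO'" "(prow a :: ('a::field ^ 3) set) \<noteq> lm"
  "(pcol b :: ('a::field ^ 3) set) \<noteq> lm" "(prow a :: ('a::field ^ 3) set) \<noteq> pcol b"
  "(gp a b :: ('a::field ^ 3) set) \<noteq> pO" "(gp a b :: ('a::field ^ 3) set) \<noteq> pO'"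
proof -
  show "(pO :: ('a::field ^ 3) set) \<noteq> pO'" using inc_facts(2)[of 0] inc_facts(5)[of 0] by auto
  show "(prow a :: ('a::field ^ 3) set) \<noteq> lm" using inc_facts(4) inc_facts(5)[of a] by auto
  show "(pcol b :: ('a::field ^ 3) set) \<noteq> lm" using inc_facts(1) inc_facts(3)[of b] by auto
  show "(prow a :: ('a::field ^ 3) set) \<noteq> pcol b" using inc_facts(2)[of a] inc_facts(3)[of b] by auto
  show "(gp a b :: ('a::field ^ 3) set) \<noteq> pO" using inc_facts(1) inc_facts(9)[of a b] by auto
  show "(gp a b :: ('a::field ^ 3) set) \<noteq> pO'" using inc_facts(4) inc_facts(9)[of a b] by auto
qed

lemma span_scale_eq:
  fixes v :: "'a::field ^ 3"
  assumes "c \<noteq> 0" shows "vec.span {c *s v} = vec.span {v}"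
proof -
  have "range (\<lambda>k. k *s (c *s v)) = range (\<lambda>k. k *s v)"
  proof (rule set_eqI, rule iffI)
    fix x assume "x \<in> range (\<lambda>k. k *s (c *s v))"
    then show "x \<in> range (\<lambda>k. k *s v)" by auto
  next
    fix x assume "x \<in> range (\<lambda>k. k *s v)"
    then obtain k where "x = k *s v" by auto
    then have "x = (k / c) *s (c *s v)" using assms by simp
    then show "x \<in> range (\<lambda>k. k *s (c *s v))" by blast
  qed
  then show ?thesis unfolding vec.span_singleton .
qed

lemma off_lm_is_gp:
  fixes p :: "('a::field ^ 3) set"
  assumes "p \<in> pg_points" "\<not> p \<subseteq> lm"
  shows "\<exists>a b. p = gp a b"
proof -
  obtain v where v: "v \<noteq> 0" "p = vec.span {v}" using point_repr assms(1) by blast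
  have v3: "v$3 \<noteq> 0" using assms(2) v pt_sub[OF sub_lines(1)] mem_lm by blast
  have "v = (v$3) *s vector [v$1 / v$3, v$2 / v$3, 1]" using v3 by (simp add: vec3_eq)
  then have "p = vec.span {vector [v$1 / v$3, v$2 / v$3, 1]}"
    using v span_scale_eq[OF v3] by metis
  then show ?thesis unfolding gp_def by blast
qed

lemma pts_on_row:
  fixes p :: "('a::field ^ 3) set"
  assumes "p \<in> pg_points" "p \<subseteq> prow a"
  shows "p = pO \<or> (\<exists>b. p = gp a b)"
proof (cases "p \<subseteq> lm")
  case True
  have ne: "lm \<noteq> (prow a :: ('a::field ^ 3) set)" using distinct_facts(2) by metis
  have "p = lm \<inter> prow a" by (rule meet_unique[OF lines_in(1) lines_in(2) ne assms(1) True assms(2)])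
  moreover have "pO = lm \<inter> prow a" by (rule meet_unique[OF lines_in(1) lines_in(2) ne pts_in(1) inc_facts(1) inc_facts(2)])
  ultimately show ?thesis by simp
next
  case False
  then obtain a' b where ab: "p = gp a' b" using off_lm_is_gp assms(1) by blast
  then have "a' = a" using assms(2) inc_facts(7) by blast
  then show ?thesis using ab by blast
qed

lemma pts_on_col:
  fixes p :: "('a::field ^ 3) set"
  assumes "p \<in> pg_points" "p \<subseteq> pcol b"
  shows "p = pO' \<or> (\<exists>a. p = gp a b)"
proof (cases "p \<subseteq> lm")
  case True
  have ne: "lm \<noteq> (pcol b :: ('a::field ^ 3) set)" using distinct_facts(3) by metis
  have "p = lm \<inter> pcol b" by (rule meet_unique[OF lines_in(1) lines_in(3) ne assms(1) True assms(2)])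
  moreover have "pO' = lm \<inter> pcol b" by (rule meet_unique[OF lines_in(1) lines_in(3) ne pts_in(2) inc_facts(4) inc_facts(6)])
  ultimately show ?thesis by simp
next
  case False
  then obtain a b' where ab: "p = gp a b'" using off_lm_is_gp assms(1) by blast
  then have "b' = b" using assms(2) inc_facts(8) by blast
  then show ?thesis using ab by blast
qed

lemma lines_thru_O:
  fixes l :: "('a::field ^ 3) set"
  assumes "l \<in> pg_lines" "pO \<subseteq> l"
  shows "l = lm \<or> (\<exists>a. l = prow a)"
proof -
  obtain p1 p2 where pp: "p1 \<in> pg_points" "p2 \<in> pg_points" "p1 \<noteq> p2" "p1 \<subseteq> l" "p2 \<subseteq> l"
    using line_two_points[OF assms(1)] by blast
  obtain p where p: "p \<in> pg_points" "p \<subseteq> l" "pO \<noteq> p"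
  proof (cases "p1 = pO")
    case True then show ?thesis using that pp by metis
  next
    case False then show ?thesis using that pp by metis
  qed
  show ?thesis
  proof (cases "p \<subseteq> lm")
    case True
    have "l = lm" by (rule join_unique[OF pts_in(1) p(1) p(3) assms(1) lines_in(1) assms(2) p(2) inc_facts(1) True])
    then show ?thesis by simp
  next
    case False
    then obtain a b where ab: "p = gp a b" using off_lm_is_gp p(1) by blast
    have "p \<subseteq> prow a" using ab inc_facts(7) by blast
    then have "l = prow a" by (rule join_unique[OF pts_in(1) p(1) p(3) assms(1) lines_in(2) assms(2) p(2) inc_facts(2)])
    then show ?thesis by blast
  qed
qed

lemma point_on_line:
  fixes p :: "('a::field ^ 3) set"
  assumes "p \<in> pg_points" shows "\<exists>l\<in>pg_lines. p \<subseteq> l"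
proof (cases "p = pO")
  case True then show ?thesis using lines_in inc_facts by blast
next
  case False then show ?thesis using join_exists[OF assms pts_in(1)] by blast
qed

lemma pts_lines_disj: "(pg_points :: ('a::field ^ 3) set set) \<inter> pg_lines = {}"
  unfolding pg_points_def pg_lines_def by auto



definition Mrel :: "nat \<Rightarrow> nat \<Rightarrow> bool" where
  "Mrel k j = (if k = 1 then j = 0 else if k = 2 then j \<noteq> 0 else if k = 3 then j \<le> 1
      else if k = 4 then 2 \<le> j else 5 \<le> k \<and> j + 2 < k)"

definition Aset :: "('a::field \<Rightarrow> nat) \<Rightarrow> ('a ^ 3) set set" where
  "Aset ix = {gp a b | a b. Mrel (ix a) (ix b)}"

definition Bset :: "('a::field \<Rightarrow> nat) \<Rightarrow> ('a ^ 3) set set" where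
  "Bset ix = {lm} \<union> {prow a | a. ix a = 0}"

lemma cnt_val:
  assumes "1 \<le> k" "k < q" "5 \<le> q"
  shows "card {j. j < q \<and> Mrel k j} = (if k = 1 then 1 else if k = 2 then q - 1 else if k = 3 then 2
      else if k = 4 then q - 2 else k - 2)"
proof -
  consider "k = 1" | "k = 2" | "k = 3" | "k = 4" | "5 \<le> k" using assms by linarith
  then show ?thesis
  proof cases
    case 1
    then have "{j. j < q \<and> Mrel k j} = {0}" using assms by (auto simp: Mrel_def)
    then show ?thesis using 1 by simp
  next
    case 2
    then have "{j. j < q \<and> Mrel k j} = {1..<q}" using assms by (auto simp: Mrel_def)
    then show ?thesis using 2 by simp
  next
    case 3
    then have "{j. j < q \<and> Mrel k j} = {0,1}" using assms by (auto simp: Mrel_def)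
    then show ?thesis using 3 by simp
  next
    case 4
    then have "{j. j < q \<and> Mrel k j} = {2..<q}" using assms by (auto simp: Mrel_def)
    then show ?thesis using 4 by simp
  next
    case 5
    then have "{j. j < q \<and> Mrel k j} = {..<k-2}" using assms by (auto simp: Mrel_def)
    then show ?thesis using 5 by simp
  qed
qed

definition fval :: "nat \<Rightarrow> nat \<Rightarrow> nat" where
  "fval q k = (if k = 1 then 1 else if k = 2 then q - 1 else if k = 3 then 2
      else if k = 4 then q - 2 else k - 2)"

lemma fval_inj:
  assumes "1 \<le> k" "k < q" "1 \<le> k'" "k' < q" "5 \<le> q" "fval q k = fval q k'"
  shows "k = k'"
proof (rule ccontr)
  assume ne: "k \<noteq> k'"
  have f: "\<And>x. 1 \<le> x \<Longrightarrow> x < q \<Longrightarrow> (x = 1 \<and> fval q x = 1) \<or> (x = 2 \<and> fval q x = q - 1)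
     \<or> (x = 3 \<and> fval q x = 2) \<or> (x = 4 \<and> fval q x = q - 2) \<or> (5 \<le> x \<and> fval q x = x - 2)"
    unfolding fval_def by auto
  from f[OF assms(1,2)] f[OF assms(3,4)] assms(2,4,5,6) ne show False
    by (elim disjE conjE) linarith+
qed

lemma cnt_inj:
  assumes "1 \<le> k" "k < q" "1 \<le> k'" "k' < q" "5 \<le> q"
    and "card {j. j < q \<and> Mrel k j} = card {j. j < q \<and> Mrel k' j}"
  shows "k = k'"
proof -
  have "card {j. j < q \<and> Mrel k j} = fval q k" using cnt_val[OF assms(1,2,5)] unfolding fval_def .
  moreover have "card {j. j < q \<and> Mrel k' j} = fval q k'" using cnt_val[OF assms(3,4,5)] unfolding fval_def .
  ultimately have "fval q k = fval q k'" using assms(6) by simp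
  then show ?thesis by (rule fval_inj[OF assms(1-5)])
qed

locale setp =
  fixes ix :: "'a::{finite,field} \<Rightarrow> nat"
  assumes bij: "bij_betw ix UNIV {..<CARD('a)}" and q5: "5 \<le> CARD('a)"
begin

abbreviation "A \<equiv> Aset ix"
abbreviation "B \<equiv> Bset ix"
definition el :: "nat \<Rightarrow> 'a" where "el k = inv_into UNIV ix k"

lemma ix_inj: "ix a = ix a' \<longleftrightarrow> a = a'"
  using bij by (metis bij_betw_imp_inj_on inj_def)

lemma ix_lt: "ix a < CARD('a)" using bij bij_betwE by blast

lemma ix_el: "k < CARD('a) \<Longrightarrow> ix (el k) = k"
  unfolding el_def using bij by (simp add: bij_betw_inv_into_right)

lemma el_ne: "k < CARD('a) \<Longrightarrow> k' < CARD('a) \<Longrightarrow> k \<noteq> k' \<Longrightarrow> el k \<noteq> el k'"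
  using ix_el by metis

lemma B_eq: "B = {lm, prow (el 0)}"
proof -
  have "{prow a | a. ix a = 0} = {prow (el 0)}"
  proof -
    have "ix a = 0 \<longleftrightarrow> a = el 0" for a using ix_el[of 0] q5 ix_inj by fastforce
    then show ?thesis by auto
  qed
  then show ?thesis unfolding Bset_def by auto
qed

lemma A_pts: "p \<in> A \<Longrightarrow> p \<in> pg_points"
  unfolding Aset_def using pts_in by auto

lemma B_lns: "l \<in> B \<Longrightarrow> l \<in> pg_lines"
  unfolding B_eq using lines_in by auto

lemma A_on_row:
  assumes "p \<in> A" "p \<subseteq> prow a"
  shows "\<exists>b. p = gp a b \<and> Mrel (ix a) (ix b)"
proof -
  obtain a' b where ab: "p = gp a' b" "Mrel (ix a') (ix b)" using assms(1) unfolding Aset_def by blast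
  have "gp a' b \<subseteq> prow a" using assms(2) ab(1) by simp
  then have "a' = a" by (simp add: inc_facts(7))
  then show ?thesis using ab by blast
qed

lemma gp_in_A: "gp a b \<in> A \<longleftrightarrow> Mrel (ix a) (ix b)"
proof
  assume "gp a b \<in> A"
  then obtain a' b' where ab: "gp a b = gp a' b'" "Mrel (ix a') (ix b')" unfolding Aset_def by blast
  then have "a = a' \<and> b = b'" by (simp add: gp_inj)
  then show "Mrel (ix a) (ix b)" using ab by simp
next
  assume "Mrel (ix a) (ix b)" then show "gp a b \<in> A" unfolding Aset_def by blast
qed

lemma A_avoid_B:
  assumes "p \<in> A" "l \<in> B" shows "\<not> p \<subseteq> l"
proof
  assume pl: "p \<subseteq> l"
  obtain a b where ab: "p = gp a b" "Mrel (ix a) (ix b)" using assms(1) unfolding Aset_def by blast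
  show False
  proof (cases "l = lm")
    case True then show False using pl ab(1) inc_facts(9)[of a b] by simp
  next
    case False
    then have "l = prow (el 0)" using assms(2) B_eq by auto
    then have "gp a b \<subseteq> prow (el 0)" using pl ab(1) by simp
    then have "a = el 0" by (simp add: inc_facts(7))
    then have "ix a = 0" using ix_el q5 by simp
    then show False using ab(2) by (simp add: Mrel_def)
  qed
qed

lemma cntA_row:
  "card {p \<in> pg_points. p \<subseteq> prow a \<and> p \<in> A} = card {j. j < CARD('a) \<and> Mrel (ix a) j}"
proof -
  have e1: "{p \<in> pg_points. p \<subseteq> prow a \<and> p \<in> A} = gp a ` {b. Mrel (ix a) (ix b)}"
  proof (rule set_eqI, rule iffI)
    fix p assume "p \<in> {p \<in> pg_points. p \<subseteq> prow a \<and> p \<in> A}"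
    then obtain b where "p = gp a b" "Mrel (ix a) (ix b)" using A_on_row by blast
    then show "p \<in> gp a ` {b. Mrel (ix a) (ix b)}" by blast
  next
    fix p assume "p \<in> gp a ` {b. Mrel (ix a) (ix b)}"
    then obtain b where b: "p = gp a b" "Mrel (ix a) (ix b)" by blast
    have "p \<in> pg_points" using b(1) pts_in(3) by simp
    moreover have "p \<subseteq> prow a" using b(1) by (simp add: inc_facts(7))
    moreover have "p \<in> A" using b gp_in_A by simp
    ultimately show "p \<in> {p \<in> pg_points. p \<subseteq> prow a \<and> p \<in> A}" by blast
  qed
  have ig: "inj_on (gp a) {b. Mrel (ix a) (ix b)}" by (rule inj_onI) (simp add: gp_inj)
  have ii: "inj_on ix {b. Mrel (ix a) (ix b)}" by (rule inj_onI) (simp add: ix_inj)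
  have e2: "ix ` {b. Mrel (ix a) (ix b)} = {j. j < CARD('a) \<and> Mrel (ix a) j}"
  proof (rule set_eqI, rule iffI)
    fix j assume "j \<in> ix ` {b. Mrel (ix a) (ix b)}" then show "j \<in> {j. j < CARD('a) \<and> Mrel (ix a) j}"
      using ix_lt by auto
  next
    fix j assume j: "j \<in> {j. j < CARD('a) \<and> Mrel (ix a) j}"
    then have "ix (el j) = j" using ix_el by simp
    then have "el j \<in> {b. Mrel (ix a) (ix b)}" using j by simp
    then show "j \<in> ix ` {b. Mrel (ix a) (ix b)}" using \<open>ix (el j) = j\<close> by (metis image_eqI)
  qed
  show ?thesis unfolding e1 card_image[OF ig] using card_image[OF ii] e2 by simp
qed

end

locale sig = setp ix for ix :: "'a::{finite,field} \<Rightarrow> nat" +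
  fixes \<sigma> :: "('a ^ 3) set \<Rightarrow> ('a ^ 3) set"
  assumes H1p: "p \<in> pg_points \<Longrightarrow> \<sigma> p \<in> pg_points"
    and H1l: "l \<in> pg_lines \<Longrightarrow> \<sigma> l \<in> pg_lines"
    and H2: "inj_on \<sigma> (pg_points \<union> pg_lines)"
    and H2s: "\<sigma> ` pg_points = pg_points"
    and H3: "p \<in> pg_points \<Longrightarrow> l \<in> pg_lines \<Longrightarrow> \<sigma> p \<subseteq> \<sigma> l \<longleftrightarrow> p \<subseteq> l"
    and H4a: "p \<in> pg_points \<Longrightarrow> \<sigma> p \<in> A \<longleftrightarrow> p \<in> A"
    and H4b: "l \<in> pg_lines \<Longrightarrow> \<sigma> l \<in> B \<longleftrightarrow> l \<in> B"
begin

lemma inj_pp: "p \<in> pg_points \<Longrightarrow> p' \<in> pg_points \<Longrightarrow> \<sigma> p = \<sigma> p' \<Longrightarrow> p = p'"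
  using H2 by (auto dest: inj_onD)

lemma inj_ll: "l \<in> pg_lines \<Longrightarrow> l' \<in> pg_lines \<Longrightarrow> \<sigma> l = \<sigma> l' \<Longrightarrow> l = l'"
  using H2 by (auto dest: inj_onD)

lemma FIXL:
  assumes "l \<in> pg_lines" "p \<in> pg_points" "p' \<in> pg_points" "p \<noteq> p'" "p \<subseteq> l" "p' \<subseteq> l"
    "\<sigma> p = p" "\<sigma> p' = p'"
  shows "\<sigma> l = l"
proof -
  have "\<sigma> p \<subseteq> \<sigma> l" using H3[OF assms(2,1)] assms(5) by simp
  then have 1: "p \<subseteq> \<sigma> l" using assms(7) by simp
  have "\<sigma> p' \<subseteq> \<sigma> l" using H3[OF assms(3,1)] assms(6) by simp
  then have 2: "p' \<subseteq> \<sigma> l" using assms(8) by simp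
  show ?thesis by (rule join_unique[OF assms(2,3,4) H1l[OF assms(1)] assms(1) 1 2 assms(5,6)])
qed

lemma FIXP:
  assumes "p \<in> pg_points" "l \<in> pg_lines" "l' \<in> pg_lines" "l \<noteq> l'" "p \<subseteq> l" "p \<subseteq> l'"
    "\<sigma> l = l" "\<sigma> l' = l'"
  shows "\<sigma> p = p"
proof -
  have "\<sigma> p \<subseteq> \<sigma> l" using H3[OF assms(1,2)] assms(5) by simp
  then have 1: "\<sigma> p \<subseteq> l" using assms(7) by simp
  have "\<sigma> p \<subseteq> \<sigma> l'" using H3[OF assms(1,3)] assms(6) by simp
  then have 2: "\<sigma> p \<subseteq> l'" using assms(8) by simp
  have "\<sigma> p = l \<inter> l'" by (rule meet_unique[OF assms(2,3,4) H1p[OF assms(1)] 1 2])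
  moreover have "p = l \<inter> l'" by (rule meet_unique[OF assms(2,3,4,1,5,6)])
  ultimately show ?thesis by simp
qed

lemma cntA_inv:
  assumes "l \<in> pg_lines"
  shows "card {p \<in> pg_points. p \<subseteq> \<sigma> l \<and> p \<in> A} = card {p \<in> pg_points. p \<subseteq> l \<and> p \<in> A}"
proof -
  have "{p \<in> pg_points. p \<subseteq> \<sigma> l \<and> p \<in> A} = \<sigma> ` {p \<in> pg_points. p \<subseteq> l \<and> p \<in> A}"
  proof (rule set_eqI, rule iffI)
    fix x assume x: "x \<in> {p \<in> pg_points. p \<subseteq> \<sigma> l \<and> p \<in> A}"
    then obtain p where p: "p \<in> pg_points" "x = \<sigma> p" using H2s by blast
    have "p \<subseteq> l" using x p H3[OF p(1) assms] by simp
    moreover have "p \<in> A" using x p H4a[OF p(1)] by simp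
    ultimately show "x \<in> \<sigma> ` {p \<in> pg_points. p \<subseteq> l \<and> p \<in> A}" using p by blast
  next
    fix x assume "x \<in> \<sigma> ` {p \<in> pg_points. p \<subseteq> l \<and> p \<in> A}"
    then obtain p where p: "p \<in> pg_points" "p \<subseteq> l" "p \<in> A" "x = \<sigma> p" by blast
    have "x \<in> pg_points" using p H1p by simp
    moreover have "x \<subseteq> \<sigma> l" using p H3[OF p(1) assms] by simp
    moreover have "x \<in> A" using p H4a[OF p(1)] by simp
    ultimately show "x \<in> {p \<in> pg_points. p \<subseteq> \<sigma> l \<and> p \<in> A}" by blast
  qed
  moreover have "inj_on \<sigma> {p \<in> pg_points. p \<subseteq> l \<and> p \<in> A}"
    using H2 by (rule inj_on_subset) auto
  ultimately show ?thesis by (simp add: card_image)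
qed

abbreviation "a0 \<equiv> el 0"
abbreviation "a1 \<equiv> el (Suc 0)"
abbreviation "a2 \<equiv> el 2"
abbreviation "a3 \<equiv> el 3"
abbreviation "a4 \<equiv> el 4"

lemma ixs: "ix a0 = 0" "ix a1 = 1" "ix a2 = 2" "ix a3 = 3" "ix a4 = 4"
  using ix_el q5 by auto

lemma ix_eq: "ix b = k \<Longrightarrow> k < CARD('a) \<Longrightarrow> b = el k"
  using ix_el ix_inj by metis

lemma a01: "a0 \<noteq> a1" "a1 \<noteq> a2" "a3 \<noteq> a4" "a0 \<noteq> a2" "a0 \<noteq> a3" "a0 \<noteq> a4"
  by (rule el_ne; use q5 in simp)+

lemma sub_fix: "p \<in> pg_points \<Longrightarrow> l \<in> pg_lines \<Longrightarrow> p \<subseteq> l \<Longrightarrow> \<sigma> l = l \<Longrightarrow> \<sigma> p \<subseteq> l"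
  using H3 by force

lemma sub_fix_row: "\<sigma> (prow a) = prow a \<Longrightarrow> \<sigma> (gp a b) \<subseteq> prow a"
  by (rule sub_fix) (simp_all add: pts_in lines_in inc_facts)

lemma fixO: "\<sigma> pO = pO"
proof -
  have ne: "lm \<noteq> prow a0" using distinct_facts(2)[of a0] by simp
  have "\<sigma> lm \<in> B" "\<sigma> (prow a0) \<in> B" using H4b lines_in B_eq by auto
  moreover have "\<sigma> lm \<noteq> \<sigma> (prow a0)"
  proof
    assume "\<sigma> lm = \<sigma> (prow a0)" then have "lm = prow a0" using inj_ll[OF lines_in(1) lines_in(2)] by blast
    then show False using ne by simp
  qed
  ultimately have c: "(\<sigma> lm = lm \<and> \<sigma> (prow a0) = prow a0) \<or> (\<sigma> lm = prow a0 \<and> \<sigma> (prow a0) = lm)"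
    using B_eq by auto
  have "\<sigma> pO \<subseteq> \<sigma> lm" using H3[OF pts_in(1) lines_in(1)] inc_facts(1) by simp
  moreover have "\<sigma> pO \<subseteq> \<sigma> (prow a0)" using H3[OF pts_in(1) lines_in(2)] inc_facts(2) by simp
  ultimately have 1: "\<sigma> pO \<subseteq> lm" and 2: "\<sigma> pO \<subseteq> prow a0" using c by auto
  have "\<sigma> pO = lm \<inter> prow a0" by (rule meet_unique[OF lines_in(1) lines_in(2) ne H1p[OF pts_in(1)] 1 2])
  moreover have "pO = lm \<inter> prow a0" by (rule meet_unique[OF lines_in(1) lines_in(2) ne pts_in(1) inc_facts(1) inc_facts(2)])
  ultimately show ?thesis by simp
qed

lemma fix_row:
  assumes "ix a \<noteq> 0" shows "\<sigma> (prow a) = prow a"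
proof -
  have l: "\<sigma> (prow a) \<in> pg_lines" using H1l lines_in by blast
  have "pO \<subseteq> \<sigma> (prow a)" using sub_fix[of pO] H3[OF pts_in(1) lines_in(2)] inc_facts(2) fixO by simp
  then have c: "\<sigma> (prow a) = lm \<or> (\<exists>a'. \<sigma> (prow a) = prow a')" using lines_thru_O l by blast
  have "prow a \<noteq> prow a0"
  proof
    assume "prow a = prow a0" then have "a = a0" by (simp add: prow_inj)
    then show False using assms ixs by simp
  qed
  then have nB: "prow a \<notin> B" using B_eq distinct_facts(2)[of a] by auto
  then have nB': "\<sigma> (prow a) \<notin> B" using H4b lines_in by blast
  then obtain a' where a': "\<sigma> (prow a) = prow a'" using c B_eq by auto
  have "ix a' \<noteq> 0"
  proof
    assume "ix a' = 0" then have "a' = a0" by (rule ix_eq) (use q5 in simp)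
    then have "\<sigma> (prow a) \<in> B" using a' B_eq by simp
    then show False using nB' by simp
  qed
  moreover have "card {j. j < CARD('a) \<and> Mrel (ix a') j} = card {j. j < CARD('a) \<and> Mrel (ix a) j}"
    using cntA_inv[OF lines_in(2), of a] a' cntA_row by simp
  ultimately have "ix a' = ix a" using cnt_inj[of "ix a'" "CARD('a)" "ix a"] ix_lt assms q5 by auto
  then show ?thesis using a' ix_inj by simp
qed

lemma fix_g10: "\<sigma> (gp a1 a0) = gp a1 a0"
proof -
  have in1: "gp a1 a0 \<in> A" using gp_in_A ixs by (simp add: Mrel_def)
  have "\<sigma> (gp a1 a0) \<in> A" using H4a pts_in in1 by blast
  moreover have "\<sigma> (gp a1 a0) \<subseteq> prow a1" using sub_fix_row fix_row ixs by simp
  ultimately obtain b where b: "\<sigma> (gp a1 a0) = gp a1 b" "Mrel (ix a1) (ix b)" using A_on_row by blast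
  then have "ix b = 0" using ixs by (simp add: Mrel_def)
  then have "b = a0" by (rule ix_eq) (use q5 in simp)
  then show ?thesis using b by simp
qed

lemma row_nonA:
  assumes "\<sigma> (prow a) = prow a" "\<not> Mrel (ix a) (ix b)"
  shows "\<exists>b'. \<sigma> (gp a b) = gp a b' \<and> \<not> Mrel (ix a) (ix b')"
proof -
  have s: "\<sigma> (gp a b) \<subseteq> prow a" using sub_fix_row assms(1) by simp
  have nA: "\<sigma> (gp a b) \<notin> A" using H4a[OF pts_in(3)] gp_in_A assms(2) by simp
  have "\<sigma> (gp a b) \<noteq> pO"
  proof
    assume "\<sigma> (gp a b) = pO" then have "\<sigma> (gp a b) = \<sigma> pO" using fixO by simp
    then have "gp a b = pO" using inj_pp[OF pts_in(3) pts_in(1)] by blast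
    then show False using distinct_facts(5) by blast
  qed
  then obtain b' where b': "\<sigma> (gp a b) = gp a b'" using pts_on_row[OF H1p[OF pts_in(3)] s] by blast
  then have "\<not> Mrel (ix a) (ix b')" using nA gp_in_A by simp
  then show ?thesis using b' by blast
qed

lemma fix_g20: "\<sigma> (gp a2 a0) = gp a2 a0"
proof -
  have "\<sigma> (prow a2) = prow a2" using fix_row ixs by simp
  then obtain b' where b': "\<sigma> (gp a2 a0) = gp a2 b'" "\<not> Mrel (ix a2) (ix b')"
    using row_nonA[of a2 a0] ixs by (auto simp: Mrel_def)
  then have "ix b' = 0" using ixs by (simp add: Mrel_def)
  then have "b' = a0" by (rule ix_eq) (use q5 in simp)
  then show ?thesis using b' by simp
qed

lemma fix_c0: "\<sigma> (pcol a0) = pcol a0"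
proof (rule FIXL[of "pcol a0" "gp a1 a0" "gp a2 a0"])
  show "gp a1 a0 \<noteq> gp a2 a0" using a01 by (simp add: gp_inj)
qed (simp_all add: lines_in pts_in inc_facts fix_g10 fix_g20)

lemma fix_g31: "\<sigma> (gp a3 a1) = gp a3 a1"
proof -
  have r: "\<sigma> (prow a3) = prow a3" using fix_row ixs by simp
  have g30: "\<sigma> (gp a3 a0) = gp a3 a0"
    by (rule FIXP[of "gp a3 a0" "prow a3" "pcol a0"]) (simp_all add: pts_in lines_in distinct_facts inc_facts r fix_c0)
  have in1: "gp a3 a1 \<in> A" using gp_in_A ixs by (simp add: Mrel_def)
  have "\<sigma> (gp a3 a1) \<in> A" using H4a pts_in in1 by blast
  moreover have "\<sigma> (gp a3 a1) \<subseteq> prow a3" using sub_fix_row r by simp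
  ultimately obtain b where b: "\<sigma> (gp a3 a1) = gp a3 b" "Mrel (ix a3) (ix b)" using A_on_row by blast
  then have "ix b \<le> 1" using ixs by (simp add: Mrel_def)
  then have "ix b = 0 \<or> ix b = 1" by linarith
  then have "b = a0 \<or> b = a1" using ix_eq[of b 0] ix_eq[of b 1] q5 by auto
  moreover have "b \<noteq> a0"
  proof
    assume "b = a0" then have "\<sigma> (gp a3 a1) = \<sigma> (gp a3 a0)" using b g30 by simp
    then have "gp a3 a1 = gp a3 a0" using inj_pp[OF pts_in(3) pts_in(3)] by blast
    then show False using a01 by (simp add: gp_inj)
  qed
  ultimately show ?thesis using b by simp
qed

lemma fix_g41: "\<sigma> (gp a4 a1) = gp a4 a1"
proof -
  have r: "\<sigma> (prow a4) = prow a4" using fix_row ixs by simp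
  have g40: "\<sigma> (gp a4 a0) = gp a4 a0"
    by (rule FIXP[of "gp a4 a0" "prow a4" "pcol a0"]) (simp_all add: pts_in lines_in distinct_facts inc_facts r fix_c0)
  have "\<not> Mrel (ix a4) (ix a1)" using ixs by (simp add: Mrel_def)
  then obtain b where b: "\<sigma> (gp a4 a1) = gp a4 b" "\<not> Mrel (ix a4) (ix b)"
    using row_nonA[OF r] by blast
  then have "ix b \<le> 1" using ixs by (simp add: Mrel_def)
  then have "ix b = 0 \<or> ix b = 1" by linarith
  then have "b = a0 \<or> b = a1" using ix_eq[of b 0] ix_eq[of b 1] q5 by auto
  moreover have "b \<noteq> a0"
  proof
    assume "b = a0" then have "\<sigma> (gp a4 a1) = \<sigma> (gp a4 a0)" using b g40 by simp
    then have "gp a4 a1 = gp a4 a0" using inj_pp[OF pts_in(3) pts_in(3)] by blast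
    then show False using a01 by (simp add: gp_inj)
  qed
  ultimately show ?thesis using b by simp
qed

lemma fix_c1: "\<sigma> (pcol a1) = pcol a1"
proof (rule FIXL[of "pcol a1" "gp a3 a1" "gp a4 a1"])
  show "gp a3 a1 \<noteq> gp a4 a1" using a01 by (simp add: gp_inj)
qed (simp_all add: lines_in pts_in inc_facts fix_g31 fix_g41)

lemma fix_O': "\<sigma> pO' = pO'"
  by (rule FIXP[of pO' "pcol a0" "pcol a1"]) (simp_all add: pts_in lines_in pcol_inj a01 inc_facts fix_c0 fix_c1)

lemma fix_lm: "\<sigma> lm = lm"
  by (rule FIXL[of lm pO pO']) (simp_all add: lines_in pts_in distinct_facts inc_facts fixO fix_O')

lemma fix_rows: "\<sigma> (prow a) = prow a"
proof (cases "ix a = 0")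
  case False then show ?thesis using fix_row by simp
next
  case True
  then have a: "a = a0" by (rule ix_eq) (use q5 in simp)
  have "\<sigma> (prow a0) \<in> B" using H4b lines_in B_eq by auto
  moreover have "\<sigma> (prow a0) \<noteq> lm"
  proof
    assume "\<sigma> (prow a0) = lm" then have "\<sigma> (prow a0) = \<sigma> lm" using fix_lm by simp
    then have "prow a0 = lm" using inj_ll[OF lines_in(2) lines_in(1)] by blast
    then show False using distinct_facts(2) by blast
  qed
  ultimately show ?thesis using a B_eq by auto
qed

lemma fix_gp_c: "\<sigma> (pcol b) = pcol b \<Longrightarrow> \<sigma> (gp a b) = gp a b"
  by (rule FIXP[of "gp a b" "prow a" "pcol b"]) (simp_all add: pts_in lines_in distinct_facts inc_facts fix_rows)

lemma fix_on_c1: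
  assumes "p \<in> pg_points" "p \<subseteq> pcol a1" shows "\<sigma> p = p"
proof -
  have "p = pO' \<or> (\<exists>a. p = gp a a1)" using pts_on_col[OF assms] .
  then show ?thesis using fix_O' fix_gp_c[OF fix_c1] by auto
qed

lemma generic:
  assumes p: "p \<in> pg_points" and u: "u \<in> pg_points" "p \<noteq> u" "\<sigma> u = u" "\<not> u \<subseteq> pcol a1"
    and l0: "l0 \<in> pg_lines" "p \<subseteq> l0" "\<sigma> l0 = l0" "\<not> u \<subseteq> l0"
  shows "\<sigma> p = p"
proof -
  obtain l where l: "l \<in> pg_lines" "p \<subseteq> l" "u \<subseteq> l" using join_exists[OF p u(1,2)] by blast
  have ne: "l \<noteq> pcol a1" using l(3) u(4) by blast
  define w where "w = l \<inter> pcol a1"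
  have w: "w \<in> pg_points" unfolding w_def by (rule meet_point[OF l(1) lines_in(3) ne])
  have wsub: "w \<subseteq> l" "w \<subseteq> pcol a1" unfolding w_def by auto
  have wf: "\<sigma> w = w" by (rule fix_on_c1[OF w wsub(2)])
  have wu: "w \<noteq> u" using wsub(2) u(4) by blast
  have lf: "\<sigma> l = l" by (rule FIXL[OF l(1) w u(1) wu wsub(1) l(3) wf u(3)])
  have "l \<noteq> l0" using l(3) l0(4) by blast
  then show ?thesis by (rule FIXP[OF p l(1) l0(1) _ l(2) l0(2) lf l0(3)])
qed

lemma fix_pts:
  assumes p: "p \<in> pg_points" shows "\<sigma> p = p"
proof (cases "p \<subseteq> lm")
  case True
  have u: "\<sigma> (gp a0 a0) = gp a0 a0" by (rule fix_gp_c[OF fix_c0])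
  have "p \<noteq> gp a0 a0" using True inc_facts(9)[of a0 a0] by blast
  moreover have "\<not> gp a0 a0 \<subseteq> pcol a1" using a01(1) by (simp add: inc_facts(8))
  ultimately show ?thesis
    using generic[OF p pts_in(3) _ u _ lines_in(1) True fix_lm inc_facts(9)] by blast
next
  case False
  then obtain a b where ab: "p = gp a b" using off_lm_is_gp p by blast
  define a' where "a' = (if a = a0 then a1 else a0)"
  have aa: "a' \<noteq> a" using a01(1) a'_def by auto
  have u: "\<sigma> (gp a' a0) = gp a' a0" by (rule fix_gp_c[OF fix_c0])
  have "p \<noteq> gp a' a0" using ab aa by (simp add: gp_inj)
  moreover have "\<not> gp a' a0 \<subseteq> pcol a1" using a01(1) by (simp add: inc_facts(8))
  moreover have "\<not> gp a' a0 \<subseteq> prow a" using aa by (simp add: inc_facts(7))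
  moreover have "p \<subseteq> prow a" using ab by (simp add: inc_facts(7))
  ultimately show ?thesis
    using generic[OF p pts_in(3) _ u _ lines_in(2) _ fix_rows] by blast
qed

lemma fix_lns:
  assumes l: "l \<in> pg_lines" shows "\<sigma> l = l"
proof -
  obtain p p' where pp: "p \<in> pg_points" "p' \<in> pg_points" "p \<noteq> p'" "p \<subseteq> l" "p' \<subseteq> l"
    using line_two_points[OF l] by blast
  show ?thesis by (rule FIXL[OF l pp fix_pts[OF pp(1)] fix_pts[OF pp(2)]])
qed

end



definition sw :: "3 \<Rightarrow> 3" where "sw i = (if i = 1 then 2 else if i = 2 then 1 else i)"

lemma sw_sw: "sw (sw i) = i"
  unfolding sw_def by auto

definition fsw :: "'a::field ^ 3 \<Rightarrow> 'a ^ 3" where "fsw v = (\<chi> i. v $ sw i)"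

lemma fsw_fsw: "fsw (fsw v) = v"
  unfolding fsw_def by (simp add: sw_sw vec_eq_iff)

lemma fsw_lin: "Vector_Spaces.linear (*s) (*s) (fsw :: 'a::field ^ 3 \<Rightarrow> 'a ^ 3)"
  unfolding Vector_Spaces.linear_iff using vec.vector_space_axioms
  by (auto simp: fsw_def vec_eq_iff)

lemma fsw_inj: "inj (fsw :: 'a::field ^ 3 \<Rightarrow> 'a ^ 3)"
  by (metis fsw_fsw injI)

definition ssw :: "('a::field ^ 3) set \<Rightarrow> ('a ^ 3) set" where "ssw S = fsw ` S"

lemma ssw_ssw: "ssw (ssw S) = S"
  unfolding ssw_def image_image fsw_fsw by simp

lemma ssw_sub: "ssw S \<subseteq> ssw T \<longleftrightarrow> S \<subseteq> T"
  unfolding ssw_def by (rule inj_image_subset_iff[OF fsw_inj])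

lemma ssw_dim_fwd:
  fixes S :: "('a::field ^ 3) set"
  assumes "vec.subspace S"
  shows "vec.subspace (ssw S)" "vec.dim (ssw S) = vec.dim S"
  unfolding ssw_def
  using vec.linear_subspace_image[OF fsw_lin assms] apply simp
  using vec.dim_image_eq[OF fsw_lin] fsw_inj by (metis inj_on_subset subset_UNIV)

lemma ssw_pts: "S \<in> pg_points \<Longrightarrow> ssw S \<in> (pg_points :: ('a::field ^ 3) set set)"
  unfolding pg_points_def using ssw_dim_fwd[of S] by auto

lemma ssw_lns: "S \<in> pg_lines \<Longrightarrow> ssw S \<in> (pg_lines :: ('a::field ^ 3) set set)"
  unfolding pg_lines_def using ssw_dim_fwd[of S] by auto

lemma ssw_pts_iff: "ssw S \<in> (pg_points :: ('a::field ^ 3) set set) \<longleftrightarrow> S \<in> pg_points"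
  using ssw_pts ssw_ssw by metis

lemma ssw_lns_iff: "ssw S \<in> (pg_lines :: ('a::field ^ 3) set set) \<longleftrightarrow> S \<in> pg_lines"
  using ssw_lns ssw_ssw by metis

lemma ssw_O: "ssw pO = (pO' :: ('a::field ^ 3) set)"
proof -
  have "fsw (vector [1, 0, 0]) = (vector [0, 1, 0] :: 'a ^ 3)"
    by (simp add: fsw_def vec_eq_iff forall_3 sw_def)
  moreover have "fsw ` vec.span {vector [1, 0, 0]} = vec.span {fsw (vector [1, 0, 0] :: 'a ^ 3)}"
  proof -
    have h: "vec.span (fsw ` {vector [1, 0, 0]}) = fsw ` vec.span {vector [1, 0, 0] :: 'a ^ 3}"
      by (rule vec.linear_span_image[OF fsw_lin])
    then have "vec.span {fsw (vector [1, 0, 0] :: 'a ^ 3)} = fsw ` vec.span {vector [1, 0, 0]}" by simp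
    then show ?thesis by (rule sym)
  qed
  ultimately show ?thesis
    unfolding ssw_def pO_def pO'_def by simp
qed

lemma levi_adj_iff:
  assumes "p \<in> pg_points" "l \<in> pg_lines"
  shows "levi_adj p l \<longleftrightarrow> p \<subseteq> l" "levi_adj l p \<longleftrightarrow> p \<subseteq> l"
  using assms pts_lines_disj unfolding levi_adj_def by blast+

lemma levi_adj_cases:
  "levi_adj S T \<Longrightarrow> (S \<in> pg_points \<and> T \<in> pg_lines \<and> S \<subseteq> T) \<or> (T \<in> pg_points \<and> S \<in> pg_lines \<and> T \<subseteq> S)"
  unfolding levi_adj_def by blast

lemma lower_bound:
  fixes c :: "('a::field ^ 3) set \<Rightarrow> nat"
  assumes cr: "c ` levi_vertices \<subseteq> {..<2}" and pr: "proper_coloring levi_vertices levi_adj c"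
  shows "\<not> distinguishing (levi_vertices :: ('a ^ 3) set set) levi_adj c"
proof
  assume d: "distinguishing (levi_vertices :: ('a ^ 3) set set) levi_adj c"
  let ?V = "levi_vertices :: ('a ^ 3) set set"
  have lt: "v \<in> ?V \<Longrightarrow> c v < 2" for v using cr by auto
  have adjne: "c p \<noteq> c l" if h: "p \<in> pg_points" "l \<in> pg_lines" "p \<subseteq> l" for p l
  proof -
    have "p \<in> ?V" "l \<in> ?V" using h unfolding levi_vertices_def by auto
    moreover have "levi_adj p l" using levi_adj_iff(1)[OF h(1,2)] h(3) by simp
    ultimately show ?thesis using pr unfolding proper_coloring_def by blast
  qed
  have cp: "c p = c p'" if pp: "p \<in> pg_points" "p' \<in> pg_points" for p p'
  proof (cases "p = p'")
    case False
    then obtain l where "l \<in> pg_lines" "p \<subseteq> l" "p' \<subseteq> l" using join_exists pp by blast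
    then have "c p \<noteq> c l" "c p' \<noteq> c l" "c p < 2" "c p' < 2" "c l < 2"
      using adjne pp lt unfolding levi_vertices_def by auto
    then show ?thesis by linarith
  qed simp
  have cl: "c l = c l'" if ll: "l \<in> pg_lines" "l' \<in> pg_lines" for l l'
  proof (cases "l = l'")
    case False
    let ?p = "l \<inter> l'"
    have "?p \<in> pg_points" using meet_point ll False by blast
    then have "c ?p \<noteq> c l" "c ?p \<noteq> c l'" "c ?p < 2" "c l < 2" "c l' < 2"
      using adjne ll lt unfolding levi_vertices_def by auto
    then show ?thesis by linarith
  qed simp
  have inV: "ssw v \<in> ?V \<longleftrightarrow> v \<in> ?V" for v
    unfolding levi_vertices_def using ssw_pts_iff ssw_lns_iff by blast
  have cs: "c (ssw v) = c v" if "v \<in> ?V" for v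
  proof (cases "v \<in> pg_points")
    case True show ?thesis using cp[OF ssw_pts[OF True] True] by simp
  next
    case False
    then have l: "v \<in> pg_lines" using that unfolding levi_vertices_def by blast
    show ?thesis using cl[OF ssw_lns[OF l] l] by simp
  qed
  have aut: "graph_aut ?V levi_adj ssw"
    unfolding graph_aut_def
  proof
    show "bij_betw ssw ?V ?V"
      by (rule bij_betwI[of _ _ _ ssw]) (auto simp: inV ssw_ssw)
    show "\<forall>u\<in>?V. \<forall>v\<in>?V. levi_adj u v = levi_adj (ssw u) (ssw v)"
      unfolding levi_adj_def by (simp add: ssw_pts_iff ssw_lns_iff ssw_sub)
  qed
  have cls: "ssw ` {v \<in> ?V. c v = i} = {v \<in> ?V. c v = i}" for i
  proof (rule set_eqI, rule iffI)
    fix x assume "x \<in> ssw ` {v \<in> ?V. c v = i}"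
    then obtain v where v: "v \<in> ?V" "c v = i" "x = ssw v" by blast
    then show "x \<in> {v \<in> ?V. c v = i}" using inV cs[OF v(1)] by simp
  next
    fix x assume x: "x \<in> {v \<in> ?V. c v = i}"
    then have "ssw x \<in> {v \<in> ?V. c v = i}" using inV cs[of x] by simp
    moreover have "x = ssw (ssw x)" by (simp add: ssw_ssw)
    ultimately show "x \<in> ssw ` {v \<in> ?V. c v = i}" by blast
  qed
  have "graph_aut ?V levi_adj ssw \<and> (\<forall>i. ssw ` {v \<in> ?V. c v = i} = {v \<in> ?V. c v = i})"
    using aut cls by simp
  then have "\<forall>v\<in>?V. ssw v = v" using d unfolding distinguishing_def by (elim allE[of _ ssw]) simp
  moreover have "pO \<in> ?V" using pts_in unfolding levi_vertices_def by blast
  ultimately have "ssw pO = (pO :: ('a ^ 3) set)" by blast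
  then have "pO' = (pO :: ('a ^ 3) set)" by (metis ssw_O)
  then show False by (metis distinct_facts(1))
qed



context setp begin

definition colr :: "('a ^ 3) set \<Rightarrow> nat" where
  "colr v = (if v \<in> pg_points then (if v \<in> A then 2 else 0) else (if v \<in> B then 2 else 1))"

lemma upper:
  "\<exists>c. c ` (levi_vertices :: ('a ^ 3) set set) \<subseteq> {..<3} \<and> proper_coloring levi_vertices levi_adj c
     \<and> distinguishing levi_vertices levi_adj c"
proof (intro exI conjI)
  let ?V = "levi_vertices :: ('a ^ 3) set set"
  show "colr ` ?V \<subseteq> {..<3}" unfolding colr_def by auto
  show "proper_coloring ?V levi_adj colr"
    unfolding proper_coloring_def
  proof (intro ballI impI)
    fix u v assume uv: "u \<in> ?V" "v \<in> ?V" "levi_adj u v"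
    have pl: "\<And>p l :: ('a ^ 3) set. p \<in> pg_points \<Longrightarrow> l \<in> pg_lines \<Longrightarrow> p \<subseteq> l \<Longrightarrow> colr p \<noteq> colr l"
    proof -
      fix p l :: "('a ^ 3) set" assume h: "p \<in> pg_points" "l \<in> pg_lines" "p \<subseteq> l"
      have "l \<notin> pg_points" using h(2) pts_lines_disj by blast
      then show "colr p \<noteq> colr l" using h A_avoid_B unfolding colr_def by auto
    qed
    from levi_adj_cases[OF uv(3)] show "colr u \<noteq> colr v"
    proof
      assume "u \<in> pg_points \<and> v \<in> pg_lines \<and> u \<subseteq> v" then show ?thesis using pl by blast
    next
      assume "v \<in> pg_points \<and> u \<in> pg_lines \<and> v \<subseteq> u" then show ?thesis using pl by metis
    qed
  qed
  show "distinguishing ?V levi_adj colr"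
    unfolding distinguishing_def
  proof (intro allI impI)
    fix \<sigma> assume hs: "graph_aut ?V levi_adj \<sigma> \<and> (\<forall>i. \<sigma> ` {v \<in> ?V. colr v = i} = {v \<in> ?V. colr v = i})"
    have bj: "bij_betw \<sigma> ?V ?V" and adj: "\<And>u v. u \<in> ?V \<Longrightarrow> v \<in> ?V \<Longrightarrow> levi_adj u v \<longleftrightarrow> levi_adj (\<sigma> u) (\<sigma> v)"
      using hs unfolding graph_aut_def by auto
    have inV: "v \<in> ?V \<Longrightarrow> \<sigma> v \<in> ?V" for v using bj bij_betwE by blast
    have cc: "colr (\<sigma> v) = colr v" if v: "v \<in> ?V" for v
    proof -
      have "\<sigma> v \<in> \<sigma> ` {w \<in> ?V. colr w = colr v}" using v by blast
      then have "\<sigma> v \<in> {w \<in> ?V. colr w = colr v}" using hs by simp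
      then show ?thesis by simp
    qed
    have PV: "p \<in> pg_points \<Longrightarrow> p \<in> ?V" for p unfolding levi_vertices_def by blast
    have LV: "l \<in> pg_lines \<Longrightarrow> l \<in> ?V" for l unfolding levi_vertices_def by blast
    have VPL: "v \<in> ?V \<Longrightarrow> v \<notin> pg_points \<Longrightarrow> v \<in> pg_lines" for v unfolding levi_vertices_def by blast
    have dj: "v \<in> pg_lines \<Longrightarrow> v \<notin> pg_points" for v using pts_lines_disj by blast
    have H1p: "\<sigma> p \<in> pg_points" if p: "p \<in> pg_points" for p
    proof (rule ccontr)
      assume np: "\<sigma> p \<notin> pg_points"
      then have sl: "\<sigma> p \<in> pg_lines" using VPL inV PV p by blast
      have "colr (\<sigma> p) = colr p" using cc PV p by blast
      then have pA: "p \<in> A" using np p unfolding colr_def by (auto split: if_splits)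
      obtain l where l: "l \<in> pg_lines" "p \<subseteq> l" using point_on_line[OF p] by blast
      have "l \<notin> B" using A_avoid_B pA l by blast
      then have "colr l = 1" using dj[OF l(1)] unfolding colr_def by simp
      then have "colr (\<sigma> l) = 1" using cc LV l by metis
      then have "\<sigma> l \<notin> pg_points" unfolding colr_def by (auto split: if_splits)
      moreover have "levi_adj (\<sigma> p) (\<sigma> l)" using adj[OF PV[OF p] LV[OF l(1)]] levi_adj_iff(1)[OF p l(1)] l by simp
      ultimately show False using np unfolding levi_adj_def by blast
    qed
    have H1l: "\<sigma> l \<in> pg_lines" if l: "l \<in> pg_lines" for l
    proof (rule ccontr)
      assume nl: "\<sigma> l \<notin> pg_lines"
      then have sp: "\<sigma> l \<in> pg_points" using VPL inV LV l by blast
      have "colr (\<sigma> l) = colr l" using cc LV l by blast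
      then have lB: "l \<in> B" using sp dj[OF l] unfolding colr_def by (auto split: if_splits)
      obtain p p' where pp: "p \<in> pg_points" "p' \<in> pg_points" "p \<noteq> p'" "p \<subseteq> l" "p' \<subseteq> l"
        using line_two_points[OF l] by blast
      have "p \<notin> A" using A_avoid_B lB pp by blast
      then have "colr p = 0" using pp(1) unfolding colr_def by simp
      then have "colr (\<sigma> p) = 0" using cc PV pp(1) by metis
      then have "\<sigma> p \<in> pg_points" unfolding colr_def by (auto split: if_splits)
      moreover have "levi_adj (\<sigma> p) (\<sigma> l)" using adj[OF PV[OF pp(1)] LV[OF l]] levi_adj_iff(1)[OF pp(1) l] pp by simp
      ultimately show False using sp dj unfolding levi_adj_def by blast
    qed
    have H2: "inj_on \<sigma> (pg_points \<union> pg_lines)" using bj unfolding bij_betw_def levi_vertices_def by simp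
    have H2s: "\<sigma> ` pg_points = pg_points"
    proof
      show "\<sigma> ` pg_points \<subseteq> pg_points" using H1p by blast
      show "pg_points \<subseteq> \<sigma> ` pg_points"
      proof
        fix x assume x: "x \<in> (pg_points :: ('a ^ 3) set set)"
        then have "x \<in> \<sigma> ` ?V" using bj PV unfolding bij_betw_def by blast
        then obtain v where v: "v \<in> ?V" "x = \<sigma> v" by blast
        have "v \<in> pg_points"
        proof (rule ccontr)
          assume "v \<notin> pg_points" then have "v \<in> pg_lines" using VPL v(1) by blast
          then have "x \<in> pg_lines" using H1l v(2) by blast
          then show False using dj x by blast
        qed
        then show "x \<in> \<sigma> ` pg_points" using v by blast
      qed
    qed
    have H3: "\<sigma> p \<subseteq> \<sigma> l \<longleftrightarrow> p \<subseteq> l" if "p \<in> pg_points" "l \<in> pg_lines" for p l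
      using adj[OF PV LV, OF that] levi_adj_iff(1)[OF that] levi_adj_iff(1)[OF H1p H1l, OF that] by simp
    have H4a: "\<sigma> p \<in> A \<longleftrightarrow> p \<in> A" if p: "p \<in> pg_points" for p
      using cc[OF PV[OF p]] H1p[OF p] p unfolding colr_def by (auto split: if_splits)
    have H4b: "\<sigma> l \<in> B \<longleftrightarrow> l \<in> B" if l: "l \<in> pg_lines" for l
      using cc[OF LV[OF l]] dj[OF H1l[OF l]] dj[OF l] unfolding colr_def by (auto split: if_splits)
    interpret S: sig ix \<sigma>
      by unfold_locales (use bij q5 H1p H1l H2 H2s H3 H4a H4b in auto)
    show "\<forall>v\<in>?V. \<sigma> v = v"
      unfolding levi_vertices_def using S.fix_pts S.fix_lns by blast
  qed
qed

end

theorem mainTheorem2: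
  assumes "\<exists>p k. prime p \<and> k > 0 \<and> CARD('a::{finite,field}) = p ^ k"
    and "CARD('a) \<ge> 5"
  shows "dist_chromatic_number (levi_vertices :: ('a ^ 3) set set) levi_adj = 3"
proof -
  let ?V = "levi_vertices :: ('a ^ 3) set set"
  define P where "P k = (\<exists>c. c ` ?V \<subseteq> {..<k} \<and> proper_coloring ?V levi_adj c \<and> distinguishing ?V levi_adj c)" for k
  obtain h where h: "bij_betw h {0..<CARD('a)} (UNIV :: 'a set)"
    using ex_bij_betw_nat_finite[of "UNIV :: 'a set"] by auto
  define ix where "ix = inv_into {0..<CARD('a)} h"
  have bij: "bij_betw ix UNIV {..<CARD('a)}"
    using bij_betw_inv_into[OF h] unfolding ix_def by (simp add: lessThan_atLeast0)
  interpret setp ix using bij assms(2) by unfold_locales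
  have P3: "P 3" unfolding P_def using upper .
  have low: "3 \<le> k" if Pk: "P k" for k
  proof (rule ccontr)
    assume "\<not> 3 \<le> k"
    then have k: "k \<le> 2" by simp
    obtain c where c: "c ` ?V \<subseteq> {..<k}" "proper_coloring ?V levi_adj c" "distinguishing ?V levi_adj c"
      using Pk unfolding P_def by blast
    have "c ` ?V \<subseteq> {..<2}" using c(1) k by auto
    then show False using lower_bound c(2,3) by blast
  qed
  have "(LEAST k. P k) = 3" by (rule Least_equality) (use P3 low in auto)
  then show ?thesis unfolding dist_chromatic_number_def P_def .
qed


end
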